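(* Let $E$ be a real Hilbert space with $\dim(E)\ge2$, $h\in E$ a unit vector, $f:\mathbb{R}_{\ge0}\to\mathbb{R}_{\ge0}$, and $C_f=\{x\in E\mid f(\|x_\perp\|)\le x_h\}$. Then $(E,\preceq_f)$, where $x\preceq_f y\iff y-x\in C_f$, is an oriented (additive) group if and only if $f(0)=0$ and $f(d)>0$ for all $d>0$.
   Context: For $x\in E$ write $x=x_h h+x_\perp$ with $x_h=(x,h)$ and $x_\perp$ orthogonal to $h$. An orientation is a reflexive, antisymmetric binary relation. An oriented additive group is an abelian group with an orientation $\preceq$ such that $x\preceq y$ implies $x+z\preceq y+z$ for all $x,y,z$. *)

theory Defs
  imports "HOL-Analysis.Analysis"
begin

definition orientation :: "('a \<Rightarrow> 'a \<Rightarrow> bool) \<Rightarrow> bool" where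
  "orientation R \<longleftrightarrow> (\<forall>x. R x x) \<and> (\<forall>x y. R x y \<and> R y x \<longrightarrow> x = y)"

definition oriented_group :: "('a::ab_group_add \<Rightarrow> 'a \<Rightarrow> bool) \<Rightarrow> bool" where
  "oriented_group R \<longleftrightarrow> orientation R \<and> (\<forall>x y z. R x y \<longrightarrow> R (x + z) (y + z))"

definition comp_h :: "'a::real_inner \<Rightarrow> 'a \<Rightarrow> real" where
  "comp_h h x = inner x h"

definition comp_perp :: "'a::real_inner \<Rightarrow> 'a \<Rightarrow> 'a" where
  "comp_perp h x = x - comp_h h x *\<^sub>R h"

definition cone_f :: "(real \<Rightarrow> real) \<Rightarrow> 'a::real_inner \<Rightarrow> 'a set" where
  "cone_f f h = {x. f (norm (comp_perp h x)) \<le> comp_h h x}"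

definition preceq_f :: "(real \<Rightarrow> real) \<Rightarrow> 'a::real_inner \<Rightarrow> 'a \<Rightarrow> 'a \<Rightarrow> bool" where
  "preceq_f f h x y \<longleftrightarrow> y - x \<in> cone_f f h"

end

theory Submission
  imports Defs
begin

lemma exists_perp:
  fixes h :: "'a::real_inner"
  assumes dim2: "\<exists>B::'a set. independent B \<and> card B = 2" and unit: "norm h = 1"
  shows "\<exists>y. y \<noteq> 0 \<and> inner y h = 0"
proof -
  obtain B :: "'a set" where B: "independent B" "card B = 2" using dim2 by blast
  have "\<not> B \<subseteq> span {h}"
  proof
    assume "B \<subseteq> span {h}"
    then have "card B \<le> card {h}" using independent_span_bound[of "{h}" B] B by simp
    then show False using B by simp
  qed
  then obtain y where y: "y \<notin> span {h}" by blast
  define z where "z = y - inner y h *\<^sub>R h"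
  have hh: "inner h h = 1" using unit by (simp add: power2_norm_eq_inner[symmetric])
  have "inner z h = 0" unfolding z_def by (simp add: inner_diff_left hh)
  moreover have "z \<noteq> 0"
  proof
    assume "z = 0"
    then have "y = inner y h *\<^sub>R h" unfolding z_def by simp
    then have "y \<in> span {h}" by (metis span_base span_scale singletonI)
    then show False using y by simp
  qed
  ultimately show ?thesis by blast
qed

theorem mainTheorem13:
  fixes h :: "'a::{real_inner, complete_space}" and f :: "real \<Rightarrow> real"
  assumes dim2: "\<exists>B::'a set. independent B \<and> card B = 2"
    and unit: "norm h = 1"
    and fnonneg: "\<forall>d\<ge>0. f d \<ge> 0"
  shows "oriented_group (preceq_f f h) \<longleftrightarrow> (f 0 = 0 \<and> (\<forall>d>0. f d > 0))"
proof
  have hh: "inner h h = 1" using unit by (simp add: power2_norm_eq_inner[symmetric])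
  assume og: "oriented_group (preceq_f f h)"
  then have refl: "\<And>x. preceq_f f h x x" and anti: "\<And>x y. preceq_f f h x y \<Longrightarrow> preceq_f f h y x \<Longrightarrow> x = y"
    unfolding oriented_group_def orientation_def by blast+
  have "f 0 \<le> 0" using refl[of 0] unfolding preceq_f_def cone_f_def comp_perp_def comp_h_def by simp
  then have f0: "f 0 = 0" using fnonneg by force
  have "f d > 0" if d: "d > 0" for d
  proof (rule ccontr)
    assume "\<not> f d > 0"
    then have fd: "f d = 0" using fnonneg d by (metis less_eq_real_def not_less)
    obtain y where y: "y \<noteq> 0" "inner y h = 0" using exists_perp[OF dim2 unit] by blast
    define x where "x = (d / norm y) *\<^sub>R y"
    have xh: "inner x h = 0" unfolding x_def using y by simp
    have nx: "norm x = d" unfolding x_def using y d by simp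
    have x0: "x \<noteq> 0" using nx d by auto
    have "preceq_f f h 0 x" unfolding preceq_f_def cone_f_def comp_perp_def comp_h_def
      using xh nx fd by simp
    moreover have "preceq_f f h x 0" unfolding preceq_f_def cone_f_def comp_perp_def comp_h_def
      using xh nx fd by (simp add: inner_minus_left)
    ultimately show False using anti x0 by force
  qed
  then show "f 0 = 0 \<and> (\<forall>d>0. f d > 0)" using f0 by blast
next
  assume A: "f 0 = 0 \<and> (\<forall>d>0. f d > 0)"
  have hh: "inner h h = 1" using unit by (simp add: power2_norm_eq_inner[symmetric])
  have key: "x = 0" if x1: "f (norm (x - inner x h *\<^sub>R h)) \<le> inner x h"
    and x2: "f (norm (-x - inner (-x) h *\<^sub>R h)) \<le> inner (-x) h" for x :: 'a
  proof -
    have e: "-x - inner (-x) h *\<^sub>R h = -(x - inner x h *\<^sub>R h)" by (simp add: inner_minus_left algebra_simps)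
    have "f (norm (x - inner x h *\<^sub>R h)) \<le> 0" using x1 x2 e by (simp add: inner_minus_left norm_minus_commute)
    then have p: "x - inner x h *\<^sub>R h = 0" using A by (metis norm_ge_zero norm_le_zero_iff not_less order.not_eq_order_implies_strict)
    then have "0 \<le> inner x h" "0 \<le> - inner x h" using x1 x2 A by (simp_all add: inner_minus_left)
    then have "inner x h = 0" by linarith
    then show "x = 0" using p by simp
  qed
  show "oriented_group (preceq_f f h)"
    unfolding oriented_group_def orientation_def preceq_f_def cone_f_def comp_perp_def comp_h_def
  proof (intro conjI allI impI)
    fix x :: 'a show "x - x \<in> {x. f (norm (x - inner x h *\<^sub>R h)) \<le> inner x h}" using A by simp
  next
    fix x y :: 'a
    assume "(y - x \<in> {x. f (norm (x - inner x h *\<^sub>R h)) \<le> inner x h}) \<and>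
            (x - y \<in> {x. f (norm (x - inner x h *\<^sub>R h)) \<le> inner x h})"
    then have "y - x = 0" using key[of "y - x"] by simp
    then show "x = y" by simp
  next
    fix x y z :: 'a
    assume "y - x \<in> {x. f (norm (x - inner x h *\<^sub>R h)) \<le> inner x h}"
    then show "y + z - (x + z) \<in> {x. f (norm (x - inner x h *\<^sub>R h)) \<le> inner x h}" by simp
  qed
qed

end
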